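(* Consider a generalised recombinator dynamics with rate $r\in(0,1]$ in which $g_1>0$, and let $x^*$ be a stationary state. Suppose that $v_{x^*}(a_d|\cdot)=u_{x^*}(a_d|\cdot)$ on $\Delta(\operatorname{supp}_{-d}(x^* ))$ for every $d$ and every trait $a_d$ with $x^*(a_d)=0$. Then, for every such $a_d$, the generalised partner dynamics of $a_d$ has a unique globally stable equilibrium.
   Context: Setting: $D=\{1,\dots,|D|\}$ finite, $|D|\ge2$; finite trait sets $A_d$; types $A=\prod_dA_d$, $a=(a_d,a_{-d})$, $a_{-d}\in A_{-d}=\prod_{d'\ne d}A_{d'}$. Payoff $u:A\times A\to\mathbb{R}_{>0}$; for $x\in\Delta(A)$: $u_x(a)=\sum_{a'}x(a')u(a,a')$, $u_x=\sum_ax(a)u_x(a)$, $x(a_d)=\sum_{a_{-d}}x(a_d,a_{-d})$, $x(a_{-d})=\sum_{a_d}x(a_d,a_{-d})$, trait payoff $u_x(a_d)=\frac1{x(a_d)}\sum_{a_{-d}}x(a_d,a_{-d})u_x(a_d,a_{-d})$; supports $\operatorname{supp}(x)$, $\operatorname{supp}_d(x)$, $\operatorname{supp}_{-d}(x)$ are the sets of types/traits/trait profiles with positive (marginal) frequency. A function $f:A\times\Delta(A)\to[0,1]$, $f(a|x)$, is regular if $\sum_af(a|x)=1$ for all $x$; its marginal function is $\varphi(a_d,x)=\frac1{x(a_d)}\sum_{a'_{-d}}f(a_d,a'_{-d}|x)$, and $\varphi$ is trait payoff increasing if $u_x(a_d)>u_x(\hat a_d)\Rightarrow\varphi(a_d,x)>\varphi(\hat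 a_d,x)$. Generalised recombinator dynamics: $\dot x(a)=(1-r)f_1(a|x)+rf_2(a|x)-x(a)$, where $f_1,f_2$ are non-negative, regular, with trait-payoff-increasing marginal functions; $f_1(a|x)=g_1(a|x)x(a)$ with $g_1$ differentiable and $g_1(a|x)>g_1(a'|x)\iff u_x(a)>u_x(a')$; and $f_2$ satisfies (i) differentiability, (ii) trait combination: $\prod_dx(a_d)>0\Rightarrow f_2(a|x)>0$, (iii) trait growth inertia: if $x(a_d)=0$ and $\partial f_2(a_d,a_{-d}|x)/\partial x(a')>0$ then $\prod_{d'\ne d}x(a_{d'})>0$ and $a'_d=a_d$. For $a_d$ with $x^*(a_d)=0$ and $a'_{-d}\in\operatorname{supp}_{-d}(x^* )$: $v_{x^*}(a_d|a'_{-d})=\frac{\partial f_2(a_d,a'_{-d}|x^* )/\partial x(a_d,a'_{-d})}{\prod_{d'\ne d}x^*(a'_{d'})}$. For $y\in\Delta(\operatorname{supp}_{-d}(x^* ))$: $u_{x^*}(a_d|y)=\sum_{a'_{-d}\in\operatorname{supp}_{-d}(x^* )}g_1(a_d,a'_{-d}|x^* )y(a'_{-d})$, $v_{x^*}(a_d|y)=\sum_{a'_{-d}}v_{x^*}(a_d|a'_{-d})y(a'_{-d})$, $U^r_{x^*}(a_d|y)=(1-r)u_{x^*}(a_d|y)+rv_{x^*}(a_d|y)$. The generalised partner dynamics of $a_d$ is the dynamics on $\Delta(\operatorname{supp}_{-d}(x^* ))$: $\dot y(a_{-d})=(1-r)g_1(a_d,a_{-d}|x^* )y(a_{-d})+r\big(\prod_{d'\ne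 d}x^*(a_{d'})\big)v_{x^*}(a_d|y)-y(a_{-d})U^r_{x^*}(a_d|y)$. It has a unique globally stable equilibrium $\eta$ if $y^t\to\eta$ as $t\to\infty$ from every initial condition. Stationary means $\dot x=0$. *)

theory Defs
  imports "HOL-Analysis.Analysis"
begin

text \<open>
Index set D is a finite type 'i; trait values live in a finite type 'v; trait set of
dimension d is A d.
A partner profile a_{-d} is an element of PiE (UNIV - {d}) A (value undefined at d);
the type (a_d, a_{-d}) is b(d := a_d).
\<close>

definition types :: "('i \<Rightarrow> 'v set) \<Rightarrow> ('i \<Rightarrow> 'v) set" where
  "types A = {a. \<forall>i. a i \<in> A i}"

definition partners :: "('i \<Rightarrow> 'v set) \<Rightarrow> 'i \<Rightarrow> ('i \<Rightarrow> 'v) set" where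
  "partners A d = PiE (UNIV - {d}) A"

definition dsimplex :: "'b set \<Rightarrow> ('b \<Rightarrow> real) set" where
  "dsimplex S = {y. (\<forall>b. 0 \<le> y b) \<and> (\<forall>b. b \<notin> S \<longrightarrow> y b = 0) \<and> sum y S = 1}"

definition upay :: "('i \<Rightarrow> 'v set) \<Rightarrow> (('i \<Rightarrow> 'v) \<Rightarrow> ('i \<Rightarrow> 'v) \<Rightarrow> real)
    \<Rightarrow> (('i \<Rightarrow> 'v) \<Rightarrow> real) \<Rightarrow> ('i \<Rightarrow> 'v) \<Rightarrow> real" where
  "upay A u x a = (\<Sum>a'\<in>types A. x a' * u a a')"

definition tfreq :: "('i \<Rightarrow> 'v set) \<Rightarrow> (('i \<Rightarrow> 'v) \<Rightarrow> real) \<Rightarrow> 'i \<Rightarrow> 'v \<Rightarrow> real" where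
  "tfreq A x d ad = (\<Sum>a\<in>{a\<in>types A. a d = ad}. x a)"

definition pfreq :: "('i \<Rightarrow> 'v set) \<Rightarrow> (('i \<Rightarrow> 'v) \<Rightarrow> real) \<Rightarrow> 'i \<Rightarrow> ('i \<Rightarrow> 'v) \<Rightarrow> real" where
  "pfreq A x d b = (\<Sum>ad\<in>A d. x (b(d := ad)))"

definition tsupp :: "('i \<Rightarrow> 'v set) \<Rightarrow> (('i \<Rightarrow> 'v) \<Rightarrow> real) \<Rightarrow> 'i \<Rightarrow> 'v set" where
  "tsupp A x d = {ad \<in> A d. tfreq A x d ad > 0}"

definition psupp :: "('i \<Rightarrow> 'v set) \<Rightarrow> (('i \<Rightarrow> 'v) \<Rightarrow> real) \<Rightarrow> 'i \<Rightarrow> ('i \<Rightarrow> 'v) set" where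
  "psupp A x d = {b \<in> partners A d. pfreq A x d b > 0}"

definition tpay :: "('i \<Rightarrow> 'v set) \<Rightarrow> (('i \<Rightarrow> 'v) \<Rightarrow> ('i \<Rightarrow> 'v) \<Rightarrow> real)
    \<Rightarrow> (('i \<Rightarrow> 'v) \<Rightarrow> real) \<Rightarrow> 'i \<Rightarrow> 'v \<Rightarrow> real" where
  "tpay A u x d ad = (1 / tfreq A x d ad) * (\<Sum>a\<in>{a\<in>types A. a d = ad}. x a * upay A u x a)"

definition marg :: "('i \<Rightarrow> 'v set) \<Rightarrow> (('i \<Rightarrow> 'v) \<Rightarrow> (('i \<Rightarrow> 'v) \<Rightarrow> real) \<Rightarrow> real)
    \<Rightarrow> (('i \<Rightarrow> 'v) \<Rightarrow> real) \<Rightarrow> 'i \<Rightarrow> 'v \<Rightarrow> real" where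
  "marg A f x d ad = (1 / tfreq A x d ad) * (\<Sum>a\<in>{a\<in>types A. a d = ad}. f a x)"

text \<open>Trait payoff increasing (on traits with positive frequency, where both sides are defined).\<close>
definition trait_payoff_increasing :: "('i \<Rightarrow> 'v set) \<Rightarrow> (('i \<Rightarrow> 'v) \<Rightarrow> ('i \<Rightarrow> 'v) \<Rightarrow> real)
    \<Rightarrow> (('i \<Rightarrow> 'v) \<Rightarrow> (('i \<Rightarrow> 'v) \<Rightarrow> real) \<Rightarrow> real) \<Rightarrow> bool" where
  "trait_payoff_increasing A u f \<longleftrightarrow>
     (\<forall>x \<in> dsimplex (types A). \<forall>d. \<forall>ad \<in> tsupp A x d. \<forall>ad' \<in> tsupp A x d.
        tpay A u x d ad > tpay A u x d ad' \<longrightarrow> marg A f x d ad > marg A f x d ad')"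

definition regular_fun :: "('i \<Rightarrow> 'v set) \<Rightarrow> (('i \<Rightarrow> 'v) \<Rightarrow> (('i \<Rightarrow> 'v) \<Rightarrow> real) \<Rightarrow> real) \<Rightarrow> bool" where
  "regular_fun A f \<longleftrightarrow>
     (\<forall>x \<in> dsimplex (types A). (\<forall>a \<in> types A. 0 \<le> f a x \<and> f a x \<le> 1) \<and>
        (\<Sum>a\<in>types A. f a x) = 1)"

definition diff_at :: "((('i::finite \<Rightarrow> 'v::finite) \<Rightarrow> real) \<Rightarrow> real) \<Rightarrow> (('i \<Rightarrow> 'v) \<Rightarrow> real) \<Rightarrow> bool" where
  "diff_at F x \<longleftrightarrow> (\<lambda>z::real^('i \<Rightarrow> 'v). F (vec_nth z)) differentiable (at (vec_lambda x))"

definition pderiv :: "((('i \<Rightarrow> 'v) \<Rightarrow> real) \<Rightarrow> real) \<Rightarrow> (('i \<Rightarrow> 'v) \<Rightarrow> real) \<Rightarrow> ('i \<Rightarrow> 'v) \<Rightarrow> real" where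
  "pderiv F x a' = deriv (\<lambda>t. F (x(a' := x a' + t))) 0"

definition gen_recombinator :: "('i::finite \<Rightarrow> 'v::finite set) \<Rightarrow> (('i \<Rightarrow> 'v) \<Rightarrow> ('i \<Rightarrow> 'v) \<Rightarrow> real)
    \<Rightarrow> (('i \<Rightarrow> 'v) \<Rightarrow> (('i \<Rightarrow> 'v) \<Rightarrow> real) \<Rightarrow> real)
    \<Rightarrow> (('i \<Rightarrow> 'v) \<Rightarrow> (('i \<Rightarrow> 'v) \<Rightarrow> real) \<Rightarrow> real) \<Rightarrow> bool" where
  "gen_recombinator A u g1 f2 \<longleftrightarrow>
     (let f1 = (\<lambda>a x. g1 a x * x a) in
      regular_fun A f1 \<and> regular_fun A f2 \<and>
      trait_payoff_increasing A u f1 \<and> trait_payoff_increasing A u f2 \<and>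
      (\<forall>x \<in> dsimplex (types A). \<forall>a \<in> types A. diff_at (g1 a) x) \<and>
      (\<forall>x \<in> dsimplex (types A). \<forall>a \<in> types A. \<forall>a' \<in> types A.
          g1 a x > g1 a' x \<longleftrightarrow> upay A u x a > upay A u x a') \<and>
      (\<forall>x \<in> dsimplex (types A). \<forall>a \<in> types A. diff_at (f2 a) x) \<and>
      (\<forall>x \<in> dsimplex (types A). \<forall>a \<in> types A.
          (\<Prod>d\<in>UNIV. tfreq A x d (a d)) > 0 \<longrightarrow> f2 a x > 0) \<and>
      (\<forall>x \<in> dsimplex (types A). \<forall>d. \<forall>a \<in> types A. \<forall>a' \<in> types A.
          tfreq A x d (a d) = 0 \<and> pderiv (f2 a) x a' > 0 \<longrightarrow>
            (\<Prod>d'\<in>UNIV - {d}. tfreq A x d' (a d')) > 0 \<and> a' d = a d))"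

definition stationary :: "('i \<Rightarrow> 'v set) \<Rightarrow> real \<Rightarrow> (('i \<Rightarrow> 'v) \<Rightarrow> (('i \<Rightarrow> 'v) \<Rightarrow> real) \<Rightarrow> real)
    \<Rightarrow> (('i \<Rightarrow> 'v) \<Rightarrow> (('i \<Rightarrow> 'v) \<Rightarrow> real) \<Rightarrow> real) \<Rightarrow> (('i \<Rightarrow> 'v) \<Rightarrow> real) \<Rightarrow> bool" where
  "stationary A r g1 f2 x \<longleftrightarrow> x \<in> dsimplex (types A) \<and>
     (\<forall>a \<in> types A. (1 - r) * (g1 a x * x a) + r * f2 a x - x a = 0)"

definition vpt :: "('i \<Rightarrow> 'v set) \<Rightarrow> (('i \<Rightarrow> 'v) \<Rightarrow> (('i \<Rightarrow> 'v) \<Rightarrow> real) \<Rightarrow> real)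
    \<Rightarrow> (('i \<Rightarrow> 'v) \<Rightarrow> real) \<Rightarrow> 'i \<Rightarrow> 'v \<Rightarrow> ('i \<Rightarrow> 'v) \<Rightarrow> real" where
  "vpt A f2 x d ad b = pderiv (f2 (b(d := ad))) x (b(d := ad)) / (\<Prod>d'\<in>UNIV - {d}. tfreq A x d' (b d'))"

definition uy :: "('i \<Rightarrow> 'v set) \<Rightarrow> (('i \<Rightarrow> 'v) \<Rightarrow> (('i \<Rightarrow> 'v) \<Rightarrow> real) \<Rightarrow> real)
    \<Rightarrow> (('i \<Rightarrow> 'v) \<Rightarrow> real) \<Rightarrow> 'i \<Rightarrow> 'v \<Rightarrow> (('i \<Rightarrow> 'v) \<Rightarrow> real) \<Rightarrow> real" where
  "uy A g1 x d ad y = (\<Sum>b\<in>psupp A x d. g1 (b(d := ad)) x * y b)"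

definition vy :: "('i \<Rightarrow> 'v set) \<Rightarrow> (('i \<Rightarrow> 'v) \<Rightarrow> (('i \<Rightarrow> 'v) \<Rightarrow> real) \<Rightarrow> real)
    \<Rightarrow> (('i \<Rightarrow> 'v) \<Rightarrow> real) \<Rightarrow> 'i \<Rightarrow> 'v \<Rightarrow> (('i \<Rightarrow> 'v) \<Rightarrow> real) \<Rightarrow> real" where
  "vy A f2 x d ad y = (\<Sum>b\<in>psupp A x d. vpt A f2 x d ad b * y b)"

definition Ury :: "('i \<Rightarrow> 'v set) \<Rightarrow> real \<Rightarrow> (('i \<Rightarrow> 'v) \<Rightarrow> (('i \<Rightarrow> 'v) \<Rightarrow> real) \<Rightarrow> real)
    \<Rightarrow> (('i \<Rightarrow> 'v) \<Rightarrow> (('i \<Rightarrow> 'v) \<Rightarrow> real) \<Rightarrow> real)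
    \<Rightarrow> (('i \<Rightarrow> 'v) \<Rightarrow> real) \<Rightarrow> 'i \<Rightarrow> 'v \<Rightarrow> (('i \<Rightarrow> 'v) \<Rightarrow> real) \<Rightarrow> real" where
  "Ury A r g1 f2 x d ad y = (1 - r) * uy A g1 x d ad y + r * vy A f2 x d ad y"

definition partner_field :: "('i \<Rightarrow> 'v set) \<Rightarrow> real \<Rightarrow> (('i \<Rightarrow> 'v) \<Rightarrow> (('i \<Rightarrow> 'v) \<Rightarrow> real) \<Rightarrow> real)
    \<Rightarrow> (('i \<Rightarrow> 'v) \<Rightarrow> (('i \<Rightarrow> 'v) \<Rightarrow> real) \<Rightarrow> real)
    \<Rightarrow> (('i \<Rightarrow> 'v) \<Rightarrow> real) \<Rightarrow> 'i \<Rightarrow> 'v \<Rightarrow> (('i \<Rightarrow> 'v) \<Rightarrow> real) \<Rightarrow> ('i \<Rightarrow> 'v) \<Rightarrow> real" where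
  "partner_field A r g1 f2 x d ad y b =
     (1 - r) * g1 (b(d := ad)) x * y b
     + r * (\<Prod>d'\<in>UNIV - {d}. tfreq A x d' (b d')) * vy A f2 x d ad y
     - y b * Ury A r g1 f2 x d ad y"

definition partner_solution :: "('i \<Rightarrow> 'v set) \<Rightarrow> real \<Rightarrow> (('i \<Rightarrow> 'v) \<Rightarrow> (('i \<Rightarrow> 'v) \<Rightarrow> real) \<Rightarrow> real)
    \<Rightarrow> (('i \<Rightarrow> 'v) \<Rightarrow> (('i \<Rightarrow> 'v) \<Rightarrow> real) \<Rightarrow> real)
    \<Rightarrow> (('i \<Rightarrow> 'v) \<Rightarrow> real) \<Rightarrow> 'i \<Rightarrow> 'v \<Rightarrow> (real \<Rightarrow> ('i \<Rightarrow> 'v) \<Rightarrow> real) \<Rightarrow> bool" where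
  "partner_solution A r g1 f2 x d ad Y \<longleftrightarrow>
     (\<forall>t\<ge>0. Y t \<in> dsimplex (psupp A x d)) \<and>
     (\<forall>t\<ge>0. \<forall>b \<in> psupp A x d.
        ((\<lambda>s. Y s b) has_real_derivative partner_field A r g1 f2 x d ad (Y t) b) (at t within {0..}))"

definition unique_gs_equilibrium :: "('i \<Rightarrow> 'v set) \<Rightarrow> real \<Rightarrow> (('i \<Rightarrow> 'v) \<Rightarrow> (('i \<Rightarrow> 'v) \<Rightarrow> real) \<Rightarrow> real)
    \<Rightarrow> (('i \<Rightarrow> 'v) \<Rightarrow> (('i \<Rightarrow> 'v) \<Rightarrow> real) \<Rightarrow> real)
    \<Rightarrow> (('i \<Rightarrow> 'v) \<Rightarrow> real) \<Rightarrow> 'i \<Rightarrow> 'v \<Rightarrow> bool" where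
  "unique_gs_equilibrium A r g1 f2 x d ad \<longleftrightarrow>
     (\<exists>\<eta> \<in> dsimplex (psupp A x d).
        (\<forall>b \<in> psupp A x d. partner_field A r g1 f2 x d ad \<eta> b = 0) \<and>
        (\<forall>\<eta>' \<in> dsimplex (psupp A x d).
            (\<forall>b \<in> psupp A x d. partner_field A r g1 f2 x d ad \<eta>' b = 0) \<longrightarrow> \<eta>' = \<eta>) \<and>
        (\<forall>Y. partner_solution A r g1 f2 x d ad Y \<longrightarrow>
            (\<forall>b \<in> psupp A x d. ((\<lambda>t. Y t b) \<longlongrightarrow> \<eta> b) at_top)))"

end

theory Submission imports Defs begin

lemma decr_from_deriv:
  fixes f f' :: "real \<Rightarrow> real"
  assumes d: "\<And>x. 0 \<le> x \<Longrightarrow> (f has_real_derivative f' x) (at x within {0..})"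
    and n: "\<And>x. 0 \<le> x \<Longrightarrow> f' x \<le> 0" and t: "0 \<le> t"
  shows "f t \<le> f 0"
proof -
  have "continuous_on {0..t} f"
  proof -
    have "continuous_on {0..} f"
      unfolding continuous_on_eq_continuous_within
      using d by (auto intro: DERIV_continuous)
    then show ?thesis by (rule continuous_on_subset) auto
  qed
  moreover have "\<exists>y. DERIV f x :> y \<and> y \<le> 0" if "0 < x" "x < t" for x
  proof -
    have "at x within {0..} = at x"
      by (rule at_within_interior) (use that in auto)
    then show ?thesis using d[of x] n[of x] that by auto
  qed
  ultimately show ?thesis using DERIV_nonpos_imp_decreasing_open[of 0 t f] t by auto
qed


lemma eigen_exists:
  fixes S :: "'b set" and g p c :: "'b \<Rightarrow> real"
  assumes fin: "finite S" and ne: "S \<noteq> {}" and gp: "\<And>b. b \<in> S \<Longrightarrow> g b > 0"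
    and pp: "\<And>b. b \<in> S \<Longrightarrow> p b > 0"
  shows "\<exists>l. (\<forall>b\<in>S. c b < l) \<and> (\<Sum>b\<in>S. g b * p b / (l - c b)) = 1"
proof -
  define cm where "cm = Max (c ` S)"
  have "cm \<in> c ` S" unfolding cm_def using Max_in[of "c ` S"] fin ne by auto
  then obtain b0 where b0: "b0 \<in> S" "c b0 = cm" by auto
  have cle: "c b \<le> cm" if "b \<in> S" for b unfolding cm_def using fin that by auto
  define f where "f l = (\<Sum>b\<in>S. g b * p b / (l - c b))" for l
  define l0 where "l0 = cm + g b0 * p b0"
  define l1 where "l1 = cm + (\<Sum>b\<in>S. g b * p b)"
  have gp0: "g b * p b > 0" if "b \<in> S" for b using gp pp that by simp
  have l0gt: "cm < l0" unfolding l0_def using gp0 b0 by simp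
  have "g b0 * p b0 \<le> (\<Sum>b\<in>S. g b * p b)"
    by (rule member_le_sum) (use b0 fin gp0 in \<open>auto intro: less_imp_le\<close>)
  hence l01: "l0 \<le> l1" unfolding l0_def l1_def by simp
  have "f l0 \<ge> 1"
  proof -
    have "1 = g b0 * p b0 / (l0 - c b0)" using b0 gp0[OF b0(1)] gp[OF b0(1)] pp[OF b0(1)] unfolding l0_def by simp
    also have "\<dots> \<le> f l0" unfolding f_def
      by (rule member_le_sum) (use b0 fin in \<open>auto intro!: less_imp_le[OF divide_pos_pos] gp0 simp: cle l0gt order.strict_trans1[OF cle l0gt]\<close>)
    finally show ?thesis .
  qed
  moreover have "f l1 \<le> 1"
  proof -
    have "f l1 \<le> (\<Sum>b\<in>S. g b * p b / (\<Sum>b\<in>S. g b * p b))" unfolding f_def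
    proof (rule sum_mono)
      fix b assume b: "b \<in> S"
      have "g b * p b \<le> (\<Sum>b\<in>S. g b * p b)"
        by (rule member_le_sum) (use b fin gp0 in \<open>auto intro: less_imp_le\<close>)
      moreover have "(\<Sum>b\<in>S. g b * p b) \<le> l1 - c b" unfolding l1_def using cle[OF b] by simp
      ultimately show "g b * p b / (l1 - c b) \<le> g b * p b / (\<Sum>b\<in>S. g b * p b)"
        using gp0[OF b] by (intro divide_left_mono) auto
    qed
    also have "\<dots> = 1"
    proof -
      have "(\<Sum>b\<in>S. g b * p b) > 0" using sum_pos[of S "\<lambda>b. g b * p b"] fin ne gp0 by auto
      thus ?thesis by (simp add: sum_divide_distrib[symmetric])
    qed
    finally show ?thesis .
  qed
  moreover have "\<forall>x. l0 \<le> x \<and> x \<le> l1 \<longrightarrow> isCont f x"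
  proof (intro allI impI)
    fix x assume "l0 \<le> x \<and> x \<le> l1"
    hence "\<forall>b\<in>S. x - c b \<noteq> 0" using cle l0gt by fastforce
    thus "isCont f x" unfolding f_def by (auto intro!: continuous_intros)
  qed
  ultimately obtain l where l: "l0 \<le> l" "l \<le> l1" "f l = 1" using IVT2[of f l1 1 l0] l01 by auto
  show ?thesis
    by (rule exI[of _ l]) (use l cle l0gt f_def in fastforce)
qed


lemma sq_expand:
  fixes w y e :: "'b \<Rightarrow> real"
  assumes "\<And>b. b \<in> S \<Longrightarrow> e b \<noteq> 0"
  shows "(\<Sum>b\<in>S. w b * (y b - m * e b)^2 / e b) =
         (\<Sum>b\<in>S. w b * (y b)^2 / e b) - 2 * m * (\<Sum>b\<in>S. w b * y b) + m^2 * (\<Sum>b\<in>S. w b * e b)"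
proof -
  have "(\<Sum>b\<in>S. w b * (y b - m * e b)^2 / e b) =
        (\<Sum>b\<in>S. w b * (y b)^2 / e b - 2 * m * (w b * y b) + m^2 * (w b * e b))"
    by (rule sum.cong) (use assms in \<open>auto simp: field_simps power2_eq_square\<close>)
  also have "\<dots> = (\<Sum>b\<in>S. w b * (y b)^2 / e b) - 2 * m * (\<Sum>b\<in>S. w b * y b) + m^2 * (\<Sum>b\<in>S. w b * e b)"
    by (simp add: sum.distrib sum_subtractf sum_distrib_left)
  finally show ?thesis .
qed


lemma core:
  fixes S :: "'b set" and g p :: "'b \<Rightarrow> real" and r :: real
    and F :: "('b \<Rightarrow> real) \<Rightarrow> 'b \<Rightarrow> real"
  assumes fin: "finite S" and gp: "\<And>b. b \<in> S \<Longrightarrow> g b > 0"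
    and pp: "\<And>b. b \<in> S \<Longrightarrow> p b > 0" and psum: "sum p S = r" and r0: "0 < r"
    and F: "\<And>y b. y \<in> dsimplex S \<Longrightarrow> b \<in> S \<Longrightarrow>
       F y b = (1 - r) * g b * y b + p b * (\<Sum>c\<in>S. g c * y c) - y b * (\<Sum>c\<in>S. g c * y c)"
  shows "\<exists>\<eta>\<in>dsimplex S. (\<forall>b\<in>S. F \<eta> b = 0) \<and>
     (\<forall>Y. ((\<forall>t\<ge>0. Y t \<in> dsimplex S) \<and>
          (\<forall>t\<ge>0. \<forall>b\<in>S. ((\<lambda>s. Y s b) has_real_derivative F (Y t) b) (at t within {0..})))
        \<longrightarrow> (\<forall>b\<in>S. ((\<lambda>t. Y t b) \<longlongrightarrow> \<eta> b) at_top))"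
proof -
  have ne: "S \<noteq> {}" using psum r0 by auto
  define c where "c b = (1 - r) * g b" for b
  obtain l where lc: "\<forall>b\<in>S. c b < l" and ls: "(\<Sum>b\<in>S. g b * p b / (l - c b)) = 1"
    using eigen_exists[of S g p c, OF fin ne] gp pp by blast
  have lcb: "l - c b > 0" if "b \<in> S" for b using lc that by auto
  define Z where "Z = (\<Sum>b\<in>S. p b / (l - c b))"
  have Zpos: "Z > 0" unfolding Z_def using fin ne pp lcb by (intro sum_pos) auto
  define \<eta> where "\<eta> b = (if b \<in> S then p b / ((l - c b) * Z) else 0)" for b
  have etapos: "\<eta> b > 0" if "b \<in> S" for b using that pp lcb Zpos unfolding \<eta>_def by auto
  have etasum: "sum \<eta> S = 1"
  proof -
    have "sum \<eta> S = (\<Sum>b\<in>S. p b / (l - c b) / Z)" unfolding \<eta>_def by (rule sum.cong) auto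
    also have "\<dots> = (\<Sum>b\<in>S. p b / (l - c b)) / Z" by (rule sum_divide_distrib[symmetric])
    finally show ?thesis using Zpos unfolding Z_def[symmetric] by simp
  qed
  have etaS: "\<eta> \<in> dsimplex S" unfolding dsimplex_def using etasum etapos
    by (auto simp: \<eta>_def intro: less_imp_le)
  define \<mu> where "\<mu> = (\<Sum>b\<in>S. g b * \<eta> b)"
  have mu_eq: "\<mu> = 1 / Z"
  proof -
    have "\<mu> = (\<Sum>b\<in>S. g b * p b / (l - c b) / Z)" unfolding \<mu>_def \<eta>_def by (rule sum.cong) auto
    also have "\<dots> = (\<Sum>b\<in>S. g b * p b / (l - c b)) / Z" by (rule sum_divide_distrib[symmetric])
    also have "\<dots> = 1 / Z" using ls by simp
    finally show ?thesis .
  qed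
  have mupos: "\<mu> > 0" using mu_eq Zpos by simp
  have F2: "\<eta> b * (l - c b) = p b * \<mu>" if "b \<in> S" for b
    using that lcb[OF that] Zpos unfolding \<eta>_def mu_eq by (simp add: field_simps)
  define N0 where "N0 = (\<Sum>b\<in>S. g b * \<eta> b / (l - c b))"
  have N0pos: "N0 > 0" unfolding N0_def using fin ne gp etapos lcb by (intro sum_pos) auto
  define \<pi> where "\<pi> b = g b / ((l - c b) * N0)" for b
  have pipos: "\<pi> b > 0" if "b \<in> S" for b using that gp lcb N0pos unfolding \<pi>_def by auto
  define \<nu> where "\<nu> = (\<Sum>b\<in>S. \<pi> b * p b)"
  have nu_eq: "\<nu> = 1 / N0"
  proof -
    have "\<nu> = (\<Sum>b\<in>S. g b * p b / (l - c b) / N0)" unfolding \<nu>_def \<pi>_def by (rule sum.cong) auto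
    also have "\<dots> = (\<Sum>b\<in>S. g b * p b / (l - c b)) / N0" by (rule sum_divide_distrib[symmetric])
    also have "\<dots> = 1 / N0" using ls by simp
    finally show ?thesis .
  qed
  have nupos: "\<nu> > 0" using nu_eq N0pos by simp
  have F3: "\<pi> b * (l - c b) = g b * \<nu>" if "b \<in> S" for b
    using that lcb[OF that] N0pos unfolding \<pi>_def nu_eq by (simp add: field_simps)
  have pieta: "(\<Sum>b\<in>S. \<pi> b * \<eta> b) = 1"
  proof -
    have "(\<Sum>b\<in>S. \<pi> b * \<eta> b) = (\<Sum>b\<in>S. g b * \<eta> b / (l - c b) / N0)"
      unfolding \<pi>_def by (rule sum.cong) auto
    also have "\<dots> = (\<Sum>b\<in>S. g b * \<eta> b / (l - c b)) / N0" by (rule sum_divide_distrib[symmetric])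
    finally show ?thesis using N0pos unfolding N0_def[symmetric] by simp
  qed
  have lmu: "l = \<mu>"
  proof -
    have "(\<Sum>b\<in>S. \<eta> b * (l - c b)) = (\<Sum>b\<in>S. p b * \<mu>)" using F2 by (rule sum.cong[OF refl])
    also have "\<dots> = r * \<mu>" using psum by (simp add: sum_distrib_right[symmetric])
    finally have e1: "(\<Sum>b\<in>S. \<eta> b * (l - c b)) = r * \<mu>" .
    have "(\<Sum>b\<in>S. \<eta> b * (l - c b)) = l * sum \<eta> S - (1 - r) * \<mu>"
    proof -
      have "(\<Sum>b\<in>S. \<eta> b * (l - c b)) = (\<Sum>b\<in>S. l * \<eta> b - (1 - r) * (g b * \<eta> b))"
        unfolding c_def by (rule sum.cong) (auto simp: algebra_simps)
      also have "\<dots> = l * sum \<eta> S - (1 - r) * \<mu>"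
        unfolding \<mu>_def by (simp add: sum_subtractf sum_distrib_left)
      finally show ?thesis .
    qed
    with e1 etasum show ?thesis by (simp add: algebra_simps)
  qed
  have U_eta: "(\<Sum>c\<in>S. g c * \<eta> c) = \<mu>" unfolding \<mu>_def ..
  have rest: "\<forall>b\<in>S. F \<eta> b = 0"
  proof
    fix b assume b: "b \<in> S"
    have "F \<eta> b = c b * \<eta> b + p b * \<mu> - \<eta> b * \<mu>" using F[OF etaS b] U_eta unfolding c_def by simp
    also have "\<dots> = 0" using F2[OF b] lmu by (simp add: algebra_simps)
    finally show "F \<eta> b = 0" .
  qed
  define K where "K = Max ((\<lambda>b. \<pi> b / g b) ` S)"
  have piK: "\<pi> b \<le> K * g b" if "b \<in> S" for b
  proof -
    have "\<pi> b / g b \<le> K" unfolding K_def using fin that by auto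
    thus ?thesis using gp[OF that] by (simp add: divide_le_eq)
  qed
  obtain b1 where b1: "b1 \<in> S" using ne by auto
  have Kpos: "K > 0" using piK[OF b1] pipos[OF b1] gp[OF b1]
    by (metis mult_nonpos_nonneg not_le less_imp_le order.strict_trans1)
  define \<kappa> where "\<kappa> = 2 * \<nu> / K"
  have kpos: "\<kappa> > 0" unfolding \<kappa>_def using nupos Kpos by simp
  define UU where "UU y = (\<Sum>b\<in>S. g b * y b)" for y :: "'b \<Rightarrow> real"
  define CC where "CC y = (\<Sum>b\<in>S. \<pi> b * y b)" for y :: "'b \<Rightarrow> real"
  define VV where "VV y = (\<Sum>b\<in>S. \<pi> b * (y b)^2 / \<eta> b)" for y :: "'b \<Rightarrow> real"
  define GG where "GG y = (\<Sum>b\<in>S. g b * (y b)^2 / \<eta> b)" for y :: "'b \<Rightarrow> real"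
  define B where "B = sum \<pi> S"
  have FU: "F y b = c b * y b + p b * UU y - y b * UU y" if "y \<in> dsimplex S" "b \<in> S" for y b
    using F[OF that] unfolding UU_def c_def by simp
  have pic: "\<pi> b * c b = l * \<pi> b - g b * \<nu>" if "b \<in> S" for b
    using F3[OF that] by (simp add: algebra_simps)
  have pip: "\<pi> b * p b / \<eta> b = g b * \<nu> / \<mu>" if "b \<in> S" for b
  proof -
    have "p b = \<eta> b * (l - c b) / \<mu>" using F2[OF that] mupos by (simp add: field_simps)
    hence "\<pi> b * p b / \<eta> b = \<pi> b * (l - c b) / \<mu>" using etapos[OF that] by simp
    thus ?thesis using F3[OF that] by simp
  qed
  have L1: "(\<Sum>b\<in>S. \<pi> b * F y b) = (l - UU y) * CC y" if y: "y \<in> dsimplex S" for y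
  proof -
    have "(\<Sum>b\<in>S. \<pi> b * F y b) =
      (\<Sum>b\<in>S. l * (\<pi> b * y b) - \<nu> * (g b * y b) + UU y * (\<pi> b * p b) - UU y * (\<pi> b * y b))"
    proof (rule sum.cong[OF refl])
      fix b assume b: "b \<in> S"
      have "\<pi> b * F y b = (\<pi> b * c b) * y b + UU y * (\<pi> b * p b) - UU y * (\<pi> b * y b)"
        unfolding FU[OF y b] by (simp add: algebra_simps)
      thus "\<pi> b * F y b = l * (\<pi> b * y b) - \<nu> * (g b * y b) + UU y * (\<pi> b * p b) - UU y * (\<pi> b * y b)"
        using pic[OF b] by (simp add: algebra_simps)
    qed
    also have "\<dots> = l * CC y - \<nu> * UU y + UU y * \<nu> - UU y * CC y"
      unfolding CC_def UU_def \<nu>_def by (simp add: sum.distrib sum_subtractf sum_distrib_left)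
    finally show ?thesis by (simp add: algebra_simps)
  qed
  have L2: "(\<Sum>b\<in>S. \<pi> b * (y b * F y b) / \<eta> b) =
      l * VV y - \<nu> * GG y + \<nu> * (UU y)^2 / \<mu> - UU y * VV y" if y: "y \<in> dsimplex S" for y
  proof -
    have "(\<Sum>b\<in>S. \<pi> b * (y b * F y b) / \<eta> b) =
      (\<Sum>b\<in>S. l * (\<pi> b * (y b)^2 / \<eta> b) - \<nu> * (g b * (y b)^2 / \<eta> b)
           + (UU y * \<nu> / \<mu>) * (g b * y b) - UU y * (\<pi> b * (y b)^2 / \<eta> b))"
    proof (rule sum.cong[OF refl])
      fix b assume b: "b \<in> S"
      have "\<pi> b * (y b * F y b) / \<eta> b = (\<pi> b * c b) * (y b)^2 / \<eta> b
          + UU y * y b * (\<pi> b * p b / \<eta> b) - UU y * (\<pi> b * (y b)^2 / \<eta> b)"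
        unfolding FU[OF y b] using etapos[OF b]
        by (simp add: field_simps power2_eq_square)
      also have "\<dots> = l * (\<pi> b * (y b)^2 / \<eta> b) - \<nu> * (g b * (y b)^2 / \<eta> b)
           + (UU y * \<nu> / \<mu>) * (g b * y b) - UU y * (\<pi> b * (y b)^2 / \<eta> b)"
        unfolding pic[OF b] pip[OF b] using mupos etapos[OF b] by (simp add: field_simps)
      finally show "\<pi> b * (y b * F y b) / \<eta> b = l * (\<pi> b * (y b)^2 / \<eta> b) - \<nu> * (g b * (y b)^2 / \<eta> b)
           + (UU y * \<nu> / \<mu>) * (g b * y b) - UU y * (\<pi> b * (y b)^2 / \<eta> b)" .
    qed
    also have "\<dots> = l * VV y - \<nu> * GG y + (UU y * \<nu> / \<mu>) * UU y - UU y * VV y"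
      unfolding VV_def GG_def UU_def by (simp add: sum.distrib sum_subtractf sum_distrib_left)
    finally show ?thesis by (simp add: power2_eq_square)
  qed
  have etane: "\<And>b. b \<in> S \<Longrightarrow> \<eta> b \<noteq> 0" using etapos by (metis less_irrefl)
  have L3: "VV y - (CC y)^2 \<le> K * (GG y - (UU y)^2 / \<mu>)" for y
  proof -
    define m where "m = UU y / \<mu>"
    have e1: "(\<Sum>b\<in>S. \<pi> b * (y b - m * \<eta> b)^2 / \<eta> b) = VV y - 2 * m * CC y + m^2"
      using sq_expand[of S \<eta> \<pi> y m, OF etane] pieta unfolding VV_def CC_def by simp
    have e2: "(\<Sum>b\<in>S. g b * (y b - m * \<eta> b)^2 / \<eta> b) = GG y - (UU y)^2 / \<mu>"
      using sq_expand[of S \<eta> g y m, OF etane] mupos unfolding GG_def UU_def \<mu>_def[symmetric] m_def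
      by (simp add: field_simps power2_eq_square)
    have "(\<Sum>b\<in>S. \<pi> b * (y b - m * \<eta> b)^2 / \<eta> b) \<le> (\<Sum>b\<in>S. K * (g b * (y b - m * \<eta> b)^2 / \<eta> b))"
    proof (rule sum_mono)
      fix b assume b: "b \<in> S"
      have "0 \<le> (y b - m * \<eta> b)^2 / \<eta> b" using etapos[OF b] by simp
      from mult_right_mono[OF piK[OF b] this]
      show "\<pi> b * (y b - m * \<eta> b)^2 / \<eta> b \<le> K * (g b * (y b - m * \<eta> b)^2 / \<eta> b)"
        by (simp add: algebra_simps)
    qed
    also have "\<dots> = K * (\<Sum>b\<in>S. g b * (y b - m * \<eta> b)^2 / \<eta> b)" by (rule sum_distrib_left[symmetric])
    also have "\<dots> = K * (GG y - (UU y)^2 / \<mu>)" by (simp only: e2)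
    finally have "VV y - 2 * m * CC y + m^2 \<le> K * (GG y - (UU y)^2 / \<mu>)" using e1 by simp
    moreover have "VV y - (CC y)^2 \<le> VV y - 2 * m * CC y + m^2"
      using zero_le_power2[of "CC y - m"] by (simp add: power2_eq_square algebra_simps)
    ultimately show ?thesis by linarith
  qed
  have L4: "\<pi> b * (y b - CC y * \<eta> b)^2 / \<eta> b \<le> VV y - (CC y)^2" if b: "b \<in> S" for y b
  proof -
    have e1: "(\<Sum>b\<in>S. \<pi> b * (y b - CC y * \<eta> b)^2 / \<eta> b) = VV y - (CC y)^2"
      using sq_expand[of S \<eta> \<pi> y "CC y", OF etane] pieta unfolding VV_def CC_def[symmetric]
      by (simp add: power2_eq_square)
    have "\<pi> b * (y b - CC y * \<eta> b)^2 / \<eta> b \<le> (\<Sum>b\<in>S. \<pi> b * (y b - CC y * \<eta> b)^2 / \<eta> b)"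
    proof (rule member_le_sum[OF b _ fin])
      fix x assume x: "x \<in> S - {b}"
      have "0 \<le> \<pi> x" "0 < \<eta> x" using pipos etapos x by (auto intro: less_imp_le)
      thus "0 \<le> \<pi> x * (y x - CC y * \<eta> x)^2 / \<eta> x" by simp
    qed
    thus ?thesis using e1 by simp
  qed
  have Cpos: "CC y > 0" if y: "y \<in> dsimplex S" for y
  proof -
    have ynn: "\<And>b. 0 \<le> y b" and ys: "sum y S = 1" using y unfolding dsimplex_def by auto
    obtain b where b: "b \<in> S" "y b > 0"
    proof (rule ccontr)
      assume "\<not> thesis"
      hence "\<forall>b\<in>S. y b = 0" using ynn that by (metis less_eq_real_def)
      hence "sum y S = 0" by simp
      thus False using ys by simp
    qed
    have "0 < \<pi> b * y b" using b pipos by simp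
    also have "\<dots> \<le> CC y" unfolding CC_def
    proof (rule member_le_sum[OF b(1) _ fin])
      fix x assume x: "x \<in> S - {b}"
      have "0 \<le> \<pi> x" using pipos x by (auto intro: less_imp_le)
      thus "0 \<le> \<pi> x * y x" using ynn by simp
    qed
    finally show ?thesis .
  qed
  have Cle: "CC y \<le> B" if y: "y \<in> dsimplex S" for y
  proof -
    have ynn: "\<And>b. 0 \<le> y b" and ys: "sum y S = 1" using y unfolding dsimplex_def by auto
    have yle: "y b \<le> 1" if "b \<in> S" for b
    proof -
      have "y b \<le> sum y S" by (rule member_le_sum) (use that fin ynn in auto)
      thus ?thesis using ys by simp
    qed
    show ?thesis unfolding CC_def B_def
      by (rule sum_mono) (use yle pipos in \<open>auto intro: mult_left_le less_imp_le\<close>)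
  qed
  show ?thesis
  proof (rule bexI[OF _ etaS], intro conjI rest allI impI)
    fix Y :: "real \<Rightarrow> 'b \<Rightarrow> real"
    assume asm: "(\<forall>t\<ge>0. Y t \<in> dsimplex S) \<and>
          (\<forall>t\<ge>0. \<forall>b\<in>S. ((\<lambda>s. Y s b) has_real_derivative F (Y t) b) (at t within {0..}))"
    hence YS: "\<And>t. t \<ge> 0 \<Longrightarrow> Y t \<in> dsimplex S"
      and Yd: "\<And>t b. t \<ge> 0 \<Longrightarrow> b \<in> S \<Longrightarrow> ((\<lambda>s. Y s b) has_real_derivative F (Y t) b) (at t within {0..})"
      by auto
    define Q where "Q s = VV (Y s) / (CC (Y s) * CC (Y s))" for s
    define h where "h s = (Q s - 1) * exp (\<kappa> * s)" for s
    define hd where "hd t = ((2 * (\<Sum>b\<in>S. \<pi> b * (Y t b * F (Y t) b) / \<eta> b)) * (CC (Y t) * CC (Y t))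
        - VV (Y t) * ((\<Sum>b\<in>S. \<pi> b * F (Y t) b) * CC (Y t) + (\<Sum>b\<in>S. \<pi> b * F (Y t) b) * CC (Y t)))
        / ((CC (Y t) * CC (Y t)) * (CC (Y t) * CC (Y t))) * exp (\<kappa> * t) + (exp (\<kappa> * t) * \<kappa>) * (Q t - 1)"
      for t
    have hder: "(h has_real_derivative hd t) (at t within {0..})" if t: "t \<ge> 0" for t
    proof -
      have dC: "((\<lambda>s. CC (Y s)) has_real_derivative (\<Sum>b\<in>S. \<pi> b * F (Y t) b)) (at t within {0..})"
        unfolding CC_def by (intro DERIV_sum DERIV_cmult Yd[OF t])
      have dV0: "((\<lambda>s. \<pi> b * (Y s b)^2 / \<eta> b) has_real_derivative \<pi> b * (Y t b * F (Y t) b) / \<eta> b * 2)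
          (at t within {0..})" if b: "b \<in> S" for b
        using Yd[OF t b] etane[OF b] by (auto intro!: derivative_eq_intros)
      have dV: "((\<lambda>s. VV (Y s)) has_real_derivative 2 * (\<Sum>b\<in>S. \<pi> b * (Y t b * F (Y t) b) / \<eta> b)) (at t within {0..})"
      proof -
        have "((\<lambda>s. VV (Y s)) has_real_derivative (\<Sum>b\<in>S. \<pi> b * (Y t b * F (Y t) b) / \<eta> b * 2)) (at t within {0..})"
          unfolding VV_def by (intro DERIV_sum dV0)
        thus ?thesis unfolding sum_distrib_right[symmetric] by (simp only: mult.commute)
      qed
      have Cne: "CC (Y t) * CC (Y t) \<noteq> 0" using Cpos[OF YS[OF t]] by simp
      have dQ: "(Q has_real_derivative ((2 * (\<Sum>b\<in>S. \<pi> b * (Y t b * F (Y t) b) / \<eta> b)) * (CC (Y t) * CC (Y t))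
        - VV (Y t) * ((\<Sum>b\<in>S. \<pi> b * F (Y t) b) * CC (Y t) + (\<Sum>b\<in>S. \<pi> b * F (Y t) b) * CC (Y t)))
        / ((CC (Y t) * CC (Y t)) * (CC (Y t) * CC (Y t)))) (at t within {0..})"
        unfolding Q_def by (rule DERIV_divide[OF dV DERIV_mult[OF dC dC] Cne])
      have dE: "((\<lambda>s. exp (\<kappa> * s)) has_real_derivative exp (\<kappa> * t) * \<kappa>) (at t within {0..})"
        by (auto intro!: derivative_eq_intros)
      have "((\<lambda>s. (Q s - 1) * exp (\<kappa> * s)) has_real_derivative hd t) (at t within {0..})"
        unfolding hd_def using DERIV_mult[OF DERIV_diff[OF dQ DERIV_const] dE] by simp
      thus ?thesis unfolding h_def .
    qed
    have hdneg: "hd t \<le> 0" if t: "t \<ge> 0" for t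
    proof -
      define y where "y = Y t"
      have y: "y \<in> dsimplex S" using YS[OF t] unfolding y_def .
      define C where "C = CC y"
      define X where "X = GG y - (UU y)^2 / \<mu>"
      have Cp: "C > 0" using Cpos[OF y] unfolding C_def .
      have D1: "((2 * (\<Sum>b\<in>S. \<pi> b * (y b * F y b) / \<eta> b)) * (C * C)
        - VV y * ((\<Sum>b\<in>S. \<pi> b * F y b) * C + (\<Sum>b\<in>S. \<pi> b * F y b) * C))
        / ((C * C) * (C * C)) = - 2 * \<nu> * X / (C * C)"
        unfolding L1[OF y] L2[OF y] C_def[symmetric] X_def using Cp lmu mupos
        by (simp add: field_simps power2_eq_square)
      have "Q t - 1 = (VV y - C^2) / (C * C)" unfolding Q_def y_def[symmetric] C_def[symmetric]
        using Cp by (simp add: field_simps power2_eq_square)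
      also have "\<dots> \<le> K * X / (C * C)" using L3[of y] Cp unfolding X_def C_def
        by (intro divide_right_mono) auto
      finally have "\<kappa> * (Q t - 1) \<le> \<kappa> * (K * X / (C * C))" using kpos by (intro mult_left_mono) auto
      also have "\<dots> = 2 * \<nu> * X / (C * C)" unfolding \<kappa>_def using Kpos by simp
      finally have "- 2 * \<nu> * X / (C * C) + \<kappa> * (Q t - 1) \<le> 0" by simp
      hence "exp (\<kappa> * t) * (- 2 * \<nu> * X / (C * C) + \<kappa> * (Q t - 1)) \<le> 0"
        by (simp add: mult_nonneg_nonpos)
      thus ?thesis unfolding hd_def y_def[symmetric] D1 C_def[symmetric] by (simp add: algebra_simps)
    qed
    have hle: "h t \<le> h 0" if "t \<ge> 0" for t
      by (rule decr_from_deriv[OF hder hdneg that])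
    define H where "H = Q 0 - 1"
    have Qb: "Q t - 1 \<le> H * exp (- \<kappa> * t)" if t: "t \<ge> 0" for t
    proof -
      have "(Q t - 1) * exp (\<kappa> * t) \<le> H" using hle[OF t] unfolding h_def H_def by simp
      hence "(Q t - 1) * exp (\<kappa> * t) * exp (- \<kappa> * t) \<le> H * exp (- \<kappa> * t)"
        by (intro mult_right_mono) auto
      thus ?thesis by (simp add: mult.assoc exp_add[symmetric])
    qed
    have conv1: "((\<lambda>t. Y t b - CC (Y t) * \<eta> b) \<longlongrightarrow> 0) at_top" if b: "b \<in> S" for b
    proof -
      define M where "M = \<eta> b / \<pi> b * (B^2 * H)"
      have bnd: "(Y t b - CC (Y t) * \<eta> b)^2 \<le> M * exp (- \<kappa> * t)" if t: "t \<ge> 0" for t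
      proof -
        have y: "Y t \<in> dsimplex S" using YS[OF t] .
        have Cp: "CC (Y t) > 0" using Cpos[OF y] .
        have "\<pi> b * (Y t b - CC (Y t) * \<eta> b)^2 / \<eta> b \<le> VV (Y t) - (CC (Y t))^2" by (rule L4[OF b])
        also have "\<dots> = (CC (Y t))^2 * (Q t - 1)" unfolding Q_def using Cp
          by (simp add: field_simps power2_eq_square)
        also have "\<dots> \<le> (CC (Y t))^2 * (H * exp (- \<kappa> * t))" by (intro mult_left_mono Qb t) auto
        also have "\<dots> \<le> B^2 * (H * exp (- \<kappa> * t))"
        proof (rule mult_right_mono)
          show "(CC (Y t))^2 \<le> B^2" using Cp Cle[OF y] by (intro power_mono) auto
          have "0 \<le> Q 0 - 1"
          proof -
            have y0: "Y 0 \<in> dsimplex S" using YS by auto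
            have C0: "CC (Y 0) > 0" using Cpos[OF y0] .
            have "0 \<le> \<pi> b * (Y 0 b - CC (Y 0) * \<eta> b)^2 / \<eta> b" using pipos[OF b] etapos[OF b] by simp
            also have "\<dots> \<le> VV (Y 0) - (CC (Y 0))^2" by (rule L4[OF b])
            finally show ?thesis unfolding Q_def using C0 by (simp add: field_simps power2_eq_square)
          qed
          thus "0 \<le> H * exp (- \<kappa> * t)" unfolding H_def by simp
        qed
        finally have "\<pi> b * (Y t b - CC (Y t) * \<eta> b)^2 / \<eta> b \<le> B^2 * (H * exp (- \<kappa> * t))" .
        thus ?thesis unfolding M_def using pipos[OF b] etapos[OF b] by (simp add: field_simps)
      qed
      have lim0: "((\<lambda>t. M * exp (- \<kappa> * t)) \<longlongrightarrow> 0) at_top"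
      proof -
        have "filterlim (\<lambda>t. \<kappa> * t) at_top at_top"
          using kpos by (auto intro!: filterlim_tendsto_pos_mult_at_top tendsto_const filterlim_ident)
        hence "filterlim (\<lambda>t. - \<kappa> * t) at_bot at_top"
          by (simp add: filterlim_uminus_at_bot)
        hence "((\<lambda>t. exp (- \<kappa> * t)) \<longlongrightarrow> 0) at_top" by (rule filterlim_compose[OF exp_at_bot])
        thus ?thesis by (auto intro: tendsto_mult_right_zero)
      qed
      have "((\<lambda>t. (Y t b - CC (Y t) * \<eta> b)^2) \<longlongrightarrow> 0) at_top"
        by (rule tendsto_sandwich[OF _ _ tendsto_const lim0])
           (use bnd in \<open>auto intro: eventually_mono[OF eventually_ge_at_top[of 0]]\<close>)
      hence "((\<lambda>t. sqrt ((Y t b - CC (Y t) * \<eta> b)^2)) \<longlongrightarrow> sqrt 0) at_top" by (rule tendsto_real_sqrt)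
      hence "((\<lambda>t. \<bar>Y t b - CC (Y t) * \<eta> b\<bar>) \<longlongrightarrow> 0) at_top" by simp
      thus ?thesis by (simp add: tendsto_rabs_zero_iff)
    qed
    have "((\<lambda>t. \<Sum>b\<in>S. (Y t b - CC (Y t) * \<eta> b)) \<longlongrightarrow> (\<Sum>b\<in>S. 0)) at_top"
      by (rule tendsto_sum) (use conv1 in auto)
    moreover have "eventually (\<lambda>t. (\<Sum>b\<in>S. (Y t b - CC (Y t) * \<eta> b)) = 1 - CC (Y t)) at_top"
    proof (rule eventually_mono[OF eventually_ge_at_top[of 0]])
      fix t :: real assume "0 \<le> t"
      hence "sum (Y t) S = 1" using YS unfolding dsimplex_def by auto
      thus "(\<Sum>b\<in>S. (Y t b - CC (Y t) * \<eta> b)) = 1 - CC (Y t)"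
        using etasum by (simp add: sum_subtractf sum_distrib_left[symmetric])
    qed
    ultimately have "((\<lambda>t. 1 - CC (Y t)) \<longlongrightarrow> 0) at_top" by (simp add: tendsto_cong)
    hence "((\<lambda>t. 1 - (1 - CC (Y t))) \<longlongrightarrow> 1 - 0) at_top" by (intro tendsto_diff tendsto_const)
    hence Clim: "((\<lambda>t. CC (Y t)) \<longlongrightarrow> 1) at_top" by simp
    show "\<forall>b\<in>S. ((\<lambda>t. Y t b) \<longlongrightarrow> \<eta> b) at_top"
    proof
      fix b assume b: "b \<in> S"
      have "((\<lambda>t. (Y t b - CC (Y t) * \<eta> b) + CC (Y t) * \<eta> b) \<longlongrightarrow> 0 + 1 * \<eta> b) at_top"
        by (intro tendsto_add conv1[OF b] tendsto_mult Clim tendsto_const)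
      thus "((\<lambda>t. Y t b) \<longlongrightarrow> \<eta> b) at_top" by simp
    qed
  qed
qed


theorem mainTheorem15:
  fixes A :: "'i::finite \<Rightarrow> 'v::finite set"
    and u :: "('i \<Rightarrow> 'v) \<Rightarrow> ('i \<Rightarrow> 'v) \<Rightarrow> real"
    and g1 f2 :: "('i \<Rightarrow> 'v) \<Rightarrow> (('i \<Rightarrow> 'v) \<Rightarrow> real) \<Rightarrow> real"
    and r :: real
    and xs :: "('i \<Rightarrow> 'v) \<Rightarrow> real"
  assumes D2: "CARD('i) \<ge> 2"
    and A_ne: "\<forall>d. A d \<noteq> {}"
    and u_pos: "\<forall>a \<in> types A. \<forall>a' \<in> types A. u a a' > 0"
    and r: "0 < r" "r \<le> 1"
    and dyn: "gen_recombinator A u g1 f2"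
    and g1_pos: "\<forall>x \<in> dsimplex (types A). \<forall>a \<in> types A. g1 a x > 0"
    and stat: "stationary A r g1 f2 xs"
    and vu: "\<forall>d. \<forall>ad \<in> A d. tfreq A xs d ad = 0 \<longrightarrow>
               (\<forall>y \<in> dsimplex (psupp A xs d). vy A f2 xs d ad y = uy A g1 xs d ad y)"
  shows "\<forall>d. \<forall>ad \<in> A d. tfreq A xs d ad = 0 \<longrightarrow> unique_gs_equilibrium A r g1 f2 xs d ad"
proof (intro allI ballI impI)
  fix d ad assume ad: "ad \<in> A d" and tf0: "tfreq A xs d ad = 0"
  have xsS: "xs \<in> dsimplex (types A)" and xstat: "\<And>a. a \<in> types A \<Longrightarrow> (1 - r) * (g1 a xs * xs a) + r * f2 a xs - xs a = 0"
    using stat unfolding stationary_def by auto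
  have xnn: "\<And>a. 0 \<le> xs a" and xsum: "sum xs (types A) = 1" using xsS unfolding dsimplex_def by auto
  have tcomb: "\<And>a. a \<in> types A \<Longrightarrow> (\<Prod>d\<in>UNIV. tfreq A xs d (a d)) > 0 \<Longrightarrow> f2 a xs > 0"
    using dyn xsS unfolding gen_recombinator_def Let_def by blast
  define S where "S = psupp A xs d"
  define g where "g b = g1 (b(d := ad)) xs" for b
  define P where "P b = (\<Prod>d'\<in>UNIV - {d}. tfreq A xs d' (b d'))" for b :: "'i \<Rightarrow> 'v"
  define p where "p b = r * P b" for b
  have finS: "finite S" by simp
  have upd_types: "b(d := v) \<in> types A" if "b \<in> partners A d" "v \<in> A d" for b v
    using that unfolding partners_def types_def by (auto simp: PiE_def Pi_def)
  have tfnn: "0 \<le> tfreq A xs d' v" for d' v unfolding tfreq_def by (intro sum_nonneg) (simp add: xnn)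
  have tfge: "xs a \<le> tfreq A xs d' (a d')" if "a \<in> types A" for a d'
    unfolding tfreq_def by (rule member_le_sum) (use that xnn in auto)
  have tsum: "(\<Sum>v\<in>A d'. tfreq A xs d' v) = 1" for d'
  proof -
    have "(\<Sum>v\<in>A d'. tfreq A xs d' v) = sum xs (types A)"
      unfolding tfreq_def by (rule sum.group) (auto simp: types_def)
    thus ?thesis using xsum by simp
  qed
  have SP: "S \<subseteq> partners A d" unfolding S_def psupp_def by auto
  have gpos: "g b > 0" if "b \<in> S" for b
    unfolding g_def using g1_pos xsS upd_types[OF _ ad] SP that by auto
  have Ppos: "P b > 0" if b: "b \<in> S" for b
  proof -
    have "pfreq A xs d b > 0" using b unfolding S_def psupp_def by auto
    then obtain v where v: "v \<in> A d" "xs (b(d := v)) > 0" unfolding pfreq_def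
      by (metis (no_types, lifting) not_le sum_nonpos)
    have a: "b(d := v) \<in> types A" using upd_types[OF _ v(1)] SP b by auto
    show ?thesis unfolding P_def
    proof (rule prod_pos)
      fix d' assume d': "d' \<in> UNIV - {d}"
      have "0 < xs (b(d := v))" by (rule v(2))
      also have "\<dots> \<le> tfreq A xs d' ((b(d := v)) d')" by (rule tfge[OF a])
      finally show "0 < tfreq A xs d' (b d')" using d' by simp
    qed
  qed
  have ppos: "p b > 0" if "b \<in> S" for b unfolding p_def using r Ppos[OF that] by simp
  have Pzero: "P b = 0" if b: "b \<in> partners A d - S" for b
  proof (rule ccontr)
    assume "P b \<noteq> 0"
    hence allpos: "tfreq A xs d' (b d') > 0" if "d' \<noteq> d" for d'
      using that tfnn unfolding P_def by (metis DiffI UNIV_I finite prod_zero_iff singletonD less_eq_real_def)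
    obtain v where v: "v \<in> A d" "tfreq A xs d v > 0"
    proof (rule ccontr)
      assume "\<not> thesis"
      hence "\<forall>v\<in>A d. tfreq A xs d v \<le> 0" using that by (metis not_le)
      hence "(\<Sum>v\<in>A d. tfreq A xs d v) \<le> 0" by (intro sum_nonpos) auto
      thus False using tsum[of d] by simp
    qed
    have bP: "b \<in> partners A d" using b by auto
    have a: "b(d := v) \<in> types A" by (rule upd_types[OF bP v(1)])
    have "(\<Prod>d''\<in>UNIV. tfreq A xs d'' ((b(d := v)) d'')) > 0"
      by (rule prod_pos) (use allpos v in auto)
    hence f2p: "f2 (b(d := v)) xs > 0" by (rule tcomb[OF a])
    have "xs (b(d := v)) \<noteq> 0"
    proof
      assume "xs (b(d := v)) = 0"
      with xstat[OF a] have "r * f2 (b(d := v)) xs = 0" by simp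
      with r f2p show False by simp
    qed
    hence xp: "xs (b(d := v)) > 0" using xnn by (metis less_eq_real_def)
    have "xs (b(d := v)) \<le> pfreq A xs d b" unfolding pfreq_def
      by (rule member_le_sum) (use v xnn in auto)
    hence "b \<in> S" unfolding S_def psupp_def using xp bP by auto
    thus False using b by auto
  qed
  have Psum: "sum P S = 1"
  proof -
    have "sum P S = sum P (partners A d)"
      by (rule sum.mono_neutral_left) (use SP Pzero in auto)
    also have "\<dots> = (\<Prod>d'\<in>UNIV - {d}. \<Sum>v\<in>A d'. tfreq A xs d' v)"
      unfolding P_def partners_def by (rule prod_sum_PiE[symmetric]) auto
    also have "\<dots> = 1" using tsum by simp
    finally show ?thesis .
  qed
  have psum: "sum p S = r" unfolding p_def using Psum by (simp add: sum_distrib_left[symmetric])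
  define F where "F = partner_field A r g1 f2 xs d ad"
  have Feq: "F y b = (1 - r) * g b * y b + p b * (\<Sum>c\<in>S. g c * y c) - y b * (\<Sum>c\<in>S. g c * y c)"
    if y: "y \<in> dsimplex S" and b: "b \<in> S" for y b
  proof -
    have vyu: "vy A f2 xs d ad y = uy A g1 xs d ad y" using vu ad tf0 y unfolding S_def by auto
    have uyeq: "uy A g1 xs d ad y = (\<Sum>c\<in>S. g c * y c)" unfolding uy_def g_def S_def ..
    show ?thesis unfolding F_def partner_field_def Ury_def vyu uyeq
      by (simp add: p_def P_def g_def algebra_simps)
  qed
  obtain \<eta> where etaS: "\<eta> \<in> dsimplex S" and rest: "\<forall>b\<in>S. F \<eta> b = 0"
    and conv: "\<forall>Y. ((\<forall>t\<ge>0. Y t \<in> dsimplex S) \<and>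
          (\<forall>t\<ge>0. \<forall>b\<in>S. ((\<lambda>s. Y s b) has_real_derivative F (Y t) b) (at t within {0..})))
        \<longrightarrow> (\<forall>b\<in>S. ((\<lambda>t. Y t b) \<longlongrightarrow> \<eta> b) at_top)"
    using core[OF finS gpos ppos psum r(1) Feq] by blast
  have conv': "\<forall>b\<in>S. ((\<lambda>t. Y t b) \<longlongrightarrow> \<eta> b) at_top" if "partner_solution A r g1 f2 xs d ad Y" for Y
    using conv that unfolding partner_solution_def F_def S_def by blast
  show "unique_gs_equilibrium A r g1 f2 xs d ad"
    unfolding unique_gs_equilibrium_def
  proof (rule bexI[of _ \<eta>], intro conjI allI impI ballI)
    show "\<eta> \<in> dsimplex (psupp A xs d)" using etaS S_def by simp
    show "\<And>b. b \<in> psupp A xs d \<Longrightarrow> partner_field A r g1 f2 xs d ad \<eta> b = 0"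
      using rest unfolding F_def S_def by auto
    show "\<And>Y b. partner_solution A r g1 f2 xs d ad Y \<Longrightarrow> b \<in> psupp A xs d \<Longrightarrow>
        ((\<lambda>t. Y t b) \<longlongrightarrow> \<eta> b) at_top" using conv' unfolding S_def by blast
  next
    fix \<eta>' assume e': "\<eta>' \<in> dsimplex (psupp A xs d)"
      and r': "\<forall>b\<in>psupp A xs d. partner_field A r g1 f2 xs d ad \<eta>' b = 0"
    have "partner_solution A r g1 f2 xs d ad (\<lambda>_. \<eta>')"
      unfolding partner_solution_def using e' r' by (auto intro: DERIV_const)
    hence lim: "\<forall>b\<in>S. ((\<lambda>t::real. \<eta>' b) \<longlongrightarrow> \<eta> b) at_top" using conv'[of "\<lambda>_. \<eta>'"] by fast
    show "\<eta>' = \<eta>"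
    proof
      fix b show "\<eta>' b = \<eta> b"
      proof (cases "b \<in> S")
        case True
        thus ?thesis using lim tendsto_const_iff[OF trivial_limit_at_top_linorder] by auto
      next
        case False
        thus ?thesis using e' etaS unfolding dsimplex_def S_def by auto
      qed
    qed
  qed
qed

end
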